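(* Let $G=(V,q)$ be a reversible, stochastically complete graph with heat semigroup $P_t$, and let $\widetilde G=(V\times V,\widetilde q)$ be a coupling graph of $G$ with heat semigroup $\widetilde P_t$. Then for all $f\in\ell_\infty(V)$ and $t\ge0$, \[ \widetilde P_t(1\otimes f)=1\otimes P_tf\qquad\text{and}\qquad \widetilde P_t(f\otimes 1)=P_tf\otimes 1. \]
   Context: A graph $G=(V,q)$ consists of a countable set $V$ and a function $q:V\times V\to[0,\infty)$ such that $\#\{y:q(x,y)>0\}<\infty$ for every $x\in V$; its Laplacian is $\Delta f(x)=\sum_y q(x,y)(f(y)-f(x))$. $G$ is reversible if there is $m:V\to(0,\infty)$ with $q(x,y)m(x)=q(y,x)m(y)$. $\ell_\infty(V)$ is the space of bounded real functions. Heat semigroup of any graph: for finite $S\subset V$ let $q_S(x,y)=q(x,y)1_S(x)$ with Laplacian $\Delta_S$, and $P^S_tf:=\sum_{k\ge0}\frac{t^k\Delta_S^k(f1_S)}{k!}$; for $f\in\ell_\infty(V)$, $P_tf:=\lim_{i}P_t^{S_i}f$ pointwise along any increasing exhaustion of $V$ by finite sets $S_i$ (the limit exists and is independent of the exhaustion). $G$ is stochastically complete if $P_t1=1$ for all $t\ge0$. $(f\otimes g)(x,y)=f(x)g(y)$. A graph $\widetilde G=(V\times V,\widetilde q)$ with Laplacian $\widetilde\Delta$ is a coupling graph of $G$ if $\widetilde\Delta(f\otimes 1)=\Delta f\otimes 1$ and $\widetilde\Delta(1\otimes f)=1\otimes\Delta f$ for all $f:V\to\mathbb R$. *)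

theory Defs
  imports "HOL-Analysis.Analysis"
begin

text \<open>A graph on the countable vertex type 'v (V = UNIV): nonnegative weights, finitely many
  out-neighbours.\<close>
definition is_graph :: "('v \<Rightarrow> 'v \<Rightarrow> real) \<Rightarrow> bool" where
  "is_graph q \<longleftrightarrow> (\<forall>x y. 0 \<le> q x y) \<and> (\<forall>x. finite {y. 0 < q x y})"

definition laplacian :: "('v \<Rightarrow> 'v \<Rightarrow> real) \<Rightarrow> ('v \<Rightarrow> real) \<Rightarrow> 'v \<Rightarrow> real" where
  "laplacian q f x = (\<Sum>y\<in>{y. 0 < q x y}. q x y * (f y - f x))"

definition reversible :: "('v \<Rightarrow> 'v \<Rightarrow> real) \<Rightarrow> bool" where
  "reversible q \<longleftrightarrow> (\<exists>m. (\<forall>x. 0 < m x) \<and> (\<forall>x y. q x y * m x = q y x * m y))"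

definition bounded_fun :: "('v \<Rightarrow> real) \<Rightarrow> bool" where
  "bounded_fun f \<longleftrightarrow> (\<exists>C. \<forall>x. \<bar>f x\<bar> \<le> C)"

definition restrict_q :: "('v \<Rightarrow> 'v \<Rightarrow> real) \<Rightarrow> 'v set \<Rightarrow> 'v \<Rightarrow> 'v \<Rightarrow> real" where
  "restrict_q q S x y = q x y * indicator S x"

definition heat_fin :: "('v \<Rightarrow> 'v \<Rightarrow> real) \<Rightarrow> 'v set \<Rightarrow> real \<Rightarrow> ('v \<Rightarrow> real) \<Rightarrow> 'v \<Rightarrow> real" where
  "heat_fin q S t f x =
     (\<Sum>k. t ^ k * ((laplacian (restrict_q q S)) ^^ k) (\<lambda>y. f y * indicator S y) x / fact k)"

definition exhaustion :: "(nat \<Rightarrow> 'v set) \<Rightarrow> bool" where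
  "exhaustion S \<longleftrightarrow> (\<forall>i. finite (S i)) \<and> incseq S \<and> (\<Union>i. S i) = UNIV"

definition heat :: "('v \<Rightarrow> 'v \<Rightarrow> real) \<Rightarrow> real \<Rightarrow> ('v \<Rightarrow> real) \<Rightarrow> 'v \<Rightarrow> real" where
  "heat q t f x = (THE L. \<forall>S. exhaustion S \<longrightarrow> (\<lambda>i. heat_fin q (S i) t f x) \<longlonglongrightarrow> L)"

definition stoch_complete :: "('v \<Rightarrow> 'v \<Rightarrow> real) \<Rightarrow> bool" where
  "stoch_complete q \<longleftrightarrow> (\<forall>t\<ge>0. heat q t (\<lambda>_. 1) = (\<lambda>_. 1))"

definition coupling_graph ::
  "('v \<Rightarrow> 'v \<Rightarrow> real) \<Rightarrow> ('v \<times> 'v \<Rightarrow> 'v \<times> 'v \<Rightarrow> real) \<Rightarrow> bool" where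
  "coupling_graph q qt \<longleftrightarrow> is_graph qt \<and>
     (\<forall>f. laplacian qt (\<lambda>(x, y). f x) = (\<lambda>(x, y). laplacian q f x)) \<and>
     (\<forall>f. laplacian qt (\<lambda>(x, y). f y) = (\<lambda>(x, y). laplacian q f y))"

end

theory Submission
  imports Defs
begin


lemma cmp:
  fixes d d' :: "real \<Rightarrow> 'p \<Rightarrow> real" and a :: "'p \<Rightarrow> 'p \<Rightarrow> real" and b :: "'p \<Rightarrow> real"
  assumes S: "finite S" and t: "0 \<le> t"
    and der: "\<And>p s. p \<in> S \<Longrightarrow> 0 \<le> s \<Longrightarrow> s \<le> t \<Longrightarrow> ((\<lambda>s. d s p) has_real_derivative d' s p) (at s)"
    and ineq: "\<And>p s. p \<in> S \<Longrightarrow> 0 \<le> s \<Longrightarrow> s \<le> t \<Longrightarrow> (\<Sum>p'\<in>S. a p p' * d s p') - b p * d s p \<le> d' s p"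
    and apos: "\<And>p p'. 0 \<le> a p p'" and bpos: "\<And>p. 0 \<le> b p"
    and init: "\<And>p. p \<in> S \<Longrightarrow> 0 \<le> d 0 p"
    and pS: "p \<in> S"
  shows "0 \<le> d t p"
proof -
  define K where "K = 1 + (\<Sum>p\<in>S. \<Sum>p'\<in>S. a p p')"
  have rowK: "(\<Sum>p'\<in>S. a p p') \<le> K - 1" if "p \<in> S" for p
  proof -
    have "(\<Sum>p'\<in>S. a p p') \<le> (\<Sum>p\<in>S. \<Sum>p'\<in>S. a p p')"
      by (rule member_le_sum[OF that _ S]) (simp add: apos sum_nonneg)
    thus ?thesis unfolding K_def by simp
  qed
  have main: "0 < d s p + \<epsilon> * exp (K * s)" if eps: "0 < \<epsilon>" and s: "0 \<le> s" "s \<le> t" and p: "p \<in> S" for \<epsilon> s p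
  proof (rule ccontr)
    define f where "f p s = d s p + \<epsilon> * exp (K * s)" for p s
    define Z where "Z = {s. 0 \<le> s \<and> s \<le> t \<and> (\<exists>p\<in>S. f p s \<le> 0)}"
    assume "\<not> 0 < d s p + \<epsilon> * exp (K * s)"
    hence "s \<in> Z" using s p unfolding Z_def f_def by force
    hence Zne: "Z \<noteq> {}" by auto
    have bddZ: "bdd_below Z" by (auto simp: Z_def bdd_below_def)
    define s0 where "s0 = Inf Z"
    have s0ge: "0 \<le> s0" unfolding s0_def by (rule cInf_greatest[OF Zne]) (auto simp: Z_def)
    have s0le: "s0 \<le> t" unfolding s0_def using cInf_lower[OF \<open>s \<in> Z\<close> bddZ] s by auto
    have fder: "((\<lambda>s. f p s) has_real_derivative d' s p + \<epsilon> * (exp (K * s) * K)) (at s)"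
      if "p \<in> S" "0 \<le> s" "s \<le> t" for p s
      unfolding f_def using der[OF that]
      by (auto intro!: derivative_eq_intros)
    have fcont: "isCont (\<lambda>s. f p s) s" if "p \<in> S" "0 \<le> s" "s \<le> t" for p s
      using fder[OF that] by (rule DERIV_isCont)
    have before: "0 < f p s" if "p \<in> S" "0 \<le> s" "s < s0" for p s
    proof (rule ccontr)
      assume "\<not> 0 < f p s"
      hence "s \<in> Z" using that s0le unfolding Z_def by (force simp: not_less)
      hence "s0 \<le> s" unfolding s0_def by (rule cInf_lower[OF _ bddZ])
      thus False using that by simp
    qed
    have atnn: "0 \<le> f p s0" if "p \<in> S" for p
    proof (cases "s0 = 0")
      case True thus ?thesis using init[OF that] eps by (simp add: f_def)
    next
      case False
      hence s0pos: "0 < s0" using s0ge by simp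
      show ?thesis
      proof (rule ccontr)
        assume "\<not> 0 \<le> f p s0"
        hence neg: "f p s0 < 0" by simp
        have "\<forall>\<^sub>F x in at s0. f p x < 0"
          using fcont[OF that s0ge s0le] neg
          by (metis isCont_def order_tendstoD(2))
        then obtain \<delta> where \<delta>: "0 < \<delta>" "\<And>x. x \<noteq> s0 \<Longrightarrow> dist x s0 < \<delta> \<Longrightarrow> f p x < 0"
          unfolding eventually_at by blast
        define x where "x = s0 - min \<delta> s0 / 2"
        have "f p x < 0" using \<delta> s0pos by (intro \<delta>(2)) (auto simp: x_def dist_real_def)
        moreover have "0 < f p x" using s0pos \<delta> by (intro before[OF that]) (auto simp: x_def)
        ultimately show False by simp
      qed
    qed
    have "\<exists>p0\<in>S. f p0 s0 \<le> 0"
    proof (rule ccontr)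
      assume "\<not> (\<exists>p0\<in>S. f p0 s0 \<le> 0)"
      hence allpos: "\<forall>p\<in>S. 0 < f p s0" by auto
      have "\<forall>p\<in>S. \<forall>\<^sub>F x in at s0. 0 < f p x"
        using fcont[OF _ s0ge s0le] allpos
        by (metis isCont_def order_tendstoD(1))
      hence "\<forall>\<^sub>F x in at s0. \<forall>p\<in>S. 0 < f p x" by (rule eventually_ball_finite[OF S])
      then obtain \<delta> where \<delta>: "0 < \<delta>" "\<And>x. x \<noteq> s0 \<Longrightarrow> dist x s0 < \<delta> \<Longrightarrow> \<forall>p\<in>S. 0 < f p x"
        unfolding eventually_at by blast
      have "Inf Z < s0 + \<delta>" using \<delta> by (simp add: s0_def)
      then obtain z where z: "z \<in> Z" "z < s0 + \<delta>" using cInf_lessD[OF Zne] by blast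
      have "s0 \<le> z" unfolding s0_def by (rule cInf_lower[OF z(1) bddZ])
      have "\<forall>p\<in>S. 0 < f p z"
      proof (cases "z = s0")
        case True thus ?thesis using allpos by simp
      next
        case False thus ?thesis using \<delta> z \<open>s0 \<le> z\<close> by (auto simp: dist_real_def)
      qed
      thus False using z(1) by (auto simp: Z_def)
    qed
    then obtain p0 where p0: "p0 \<in> S" "f p0 s0 \<le> 0" by blast
    have fz: "f p0 s0 = 0" using atnn[OF p0(1)] p0(2) by simp
    have s0pos: "0 < s0"
    proof (rule ccontr)
      assume "\<not> 0 < s0" hence "s0 = 0" using s0ge by simp
      thus False using fz init[OF p0(1)] eps by (simp add: f_def)
    qed
    define E where "E = exp (K * s0)"
    have Epos: "0 < E" by (simp add: E_def)
    have dp0: "d s0 p0 = - \<epsilon> * E" using fz by (simp add: f_def E_def)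
    have dge: "- \<epsilon> * E \<le> d s0 p'" if "p' \<in> S" for p'
      using atnn[OF that] by (simp add: f_def E_def)
    have "(\<Sum>p'\<in>S. a p0 p' * (- \<epsilon> * E)) \<le> (\<Sum>p'\<in>S. a p0 p' * d s0 p')"
      by (intro sum_mono mult_left_mono dge apos)
    moreover have "(\<Sum>p'\<in>S. a p0 p' * (- \<epsilon> * E)) = - \<epsilon> * E * (\<Sum>p'\<in>S. a p0 p')"
      by (simp add: sum_distrib_right sum_distrib_left mult.commute mult.left_commute)
    moreover have "- \<epsilon> * E * (\<Sum>p'\<in>S. a p0 p') \<ge> - \<epsilon> * E * (K - 1)"
      using rowK[OF p0(1)] eps Epos by (intro mult_left_mono_neg) auto
    moreover have "- b p0 * d s0 p0 \<ge> 0" using dp0 bpos[of p0] eps Epos by simp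
    ultimately have "- \<epsilon> * E * (K - 1) \<le> d' s0 p0"
      using ineq[OF p0(1) s0ge s0le] by linarith
    hence Dpos: "0 < d' s0 p0 + \<epsilon> * (exp (K * s0) * K)"
    proof -
      have "0 < E * \<epsilon>" using eps Epos by simp
      thus ?thesis using \<open>- \<epsilon> * E * (K - 1) \<le> d' s0 p0\<close> unfolding E_def[symmetric] by (simp add: algebra_simps)
    qed
    obtain \<delta> where \<delta>: "0 < \<delta>" "\<And>h. 0 < h \<Longrightarrow> h < \<delta> \<Longrightarrow> f p0 (s0 - h) < f p0 s0"
      using DERIV_pos_inc_left[OF fder[OF p0(1) s0ge s0le] Dpos] by blast
    define h where "h = min \<delta> s0 / 2"
    have "f p0 (s0 - h) < 0" using \<delta> s0pos fz by (intro \<delta>(2)[THEN less_le_trans]) (auto simp: h_def)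
    moreover have "0 < f p0 (s0 - h)" using s0pos \<delta> by (intro before[OF p0(1)]) (auto simp: h_def)
    ultimately show False by simp
  qed
  show ?thesis
  proof (rule field_le_epsilon)
    fix e :: real assume e: "0 < e"
    have "0 < d t p + (e / exp (K * t)) * exp (K * t)"
      using main[OF divide_pos_pos[OF e exp_gt_zero] t order_refl pS] .
    thus "0 \<le> d t p + e" by simp
  qed
qed



definition deg :: "('v \<Rightarrow> 'v \<Rightarrow> real) \<Rightarrow> 'v \<Rightarrow> real" where
  "deg q x = (\<Sum>y\<in>{y. 0 < q x y}. q x y)"

definition hu :: "('v \<Rightarrow> 'v \<Rightarrow> real) \<Rightarrow> 'v set \<Rightarrow> ('v \<Rightarrow> real) \<Rightarrow> nat \<Rightarrow> 'v \<Rightarrow> real" where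
  "hu q S g k = (laplacian (restrict_q q S) ^^ k) (\<lambda>y. g y * indicator S y)"

lemma heat_fin_hu: "heat_fin q S t g x = (\<Sum>k. t ^ k * hu q S g k x / fact k)"
  by (simp add: heat_fin_def hu_def)

lemma lap_restrict: "laplacian (restrict_q q S) h x = indicator S x * laplacian q h x"
  by (cases "x \<in> S") (simp_all add: laplacian_def restrict_q_def)

lemma lap_split: "laplacian q h x = (\<Sum>y\<in>{y. 0 < q x y}. q x y * h y) - deg q x * h x"
  by (simp add: laplacian_def deg_def algebra_simps sum_subtractf sum_distrib_left mult.commute)

lemma hu_Suc: "hu q S g (Suc k) = laplacian (restrict_q q S) (hu q S g k)"
  by (simp add: hu_def)

lemma hu_out: "x \<notin> S \<Longrightarrow> hu q S g k x = 0"
  by (cases k) (simp_all add: hu_def lap_restrict)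

lemma deg_nonneg: "0 \<le> deg q x"
  unfolding deg_def by (rule sum_nonneg) simp

lemma cmp2:
  fixes d d' :: "real \<Rightarrow> 'p \<Rightarrow> real"
  assumes G: "is_graph Q" and S: "finite S" and t: "0 \<le> t"
    and der: "\<And>p s. p \<in> S \<Longrightarrow> 0 \<le> s \<Longrightarrow> s \<le> t \<Longrightarrow> ((\<lambda>s. d s p) has_real_derivative d' s p) (at s)"
    and ineq: "\<And>p s. p \<in> S \<Longrightarrow> 0 \<le> s \<Longrightarrow> s \<le> t \<Longrightarrow> laplacian Q (d s) p \<le> d' s p"
    and out: "\<And>p s. p \<notin> S \<Longrightarrow> 0 \<le> s \<Longrightarrow> s \<le> t \<Longrightarrow> 0 \<le> d s p"
    and init: "\<And>p. p \<in> S \<Longrightarrow> 0 \<le> d 0 p"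
    and pS: "p \<in> S"
  shows "0 \<le> d t p"
proof (rule cmp[OF S t der _ _ _ init pS, where a=Q and b="deg Q"])
  show "0 \<le> Q p p'" for p p' using G by (simp add: is_graph_def)
  show "0 \<le> deg Q p" for p by (rule deg_nonneg)
  fix p s assume p: "p \<in> S" and s: "0 \<le> s" "s \<le> t"
  have fin: "finite {y. 0 < Q p y}" using G by (simp add: is_graph_def)
  have Qnn: "0 \<le> Q p y" for y using G by (simp add: is_graph_def)
  let ?N = "{y. 0 < Q p y}"
  have "(\<Sum>p'\<in>S. Q p p' * d s p') = (\<Sum>p'\<in>S \<inter> ?N. Q p p' * d s p')"
    using S by (intro sum.mono_neutral_right) (auto simp: order.strict_iff_order Qnn)
  also have "\<dots> \<le> (\<Sum>p'\<in>?N. Q p p' * d s p')"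
  proof -
    have "(\<Sum>p'\<in>?N. Q p p' * d s p') = (\<Sum>p'\<in>?N \<inter> S. Q p p' * d s p') + (\<Sum>p'\<in>?N - S. Q p p' * d s p')"
      using fin by (metis sum.Int_Diff)
    moreover have "0 \<le> (\<Sum>p'\<in>?N - S. Q p p' * d s p')"
      by (intro sum_nonneg mult_nonneg_nonneg Qnn out s) auto
    ultimately show ?thesis by (simp add: Int_commute)
  qed
  finally show "(\<Sum>p'\<in>S. Q p p' * d s p') - deg Q p * d s p \<le> d' s p"
    using ineq[OF p s] unfolding lap_split by linarith
qed



lemma abs_le_N:
  fixes h :: "'a \<Rightarrow> real"
  assumes "finite S" "\<And>y. y \<notin> S \<Longrightarrow> h y = 0"
  shows "\<bar>h y\<bar> \<le> (\<Sum>z\<in>S. \<bar>h z\<bar>)"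
proof (cases "y \<in> S")
  case True show ?thesis by (rule member_le_sum[OF True]) (use assms in auto)
next
  case False thus ?thesis using assms by (simp add: sum_nonneg)
qed

lemma lap_bound:
  assumes G: "is_graph q" and S: "finite S" and h: "\<And>y. y \<notin> S \<Longrightarrow> h y = 0"
  shows "\<bar>laplacian q h z\<bar> \<le> 2 * deg q z * (\<Sum>z\<in>S. \<bar>h z\<bar>)"
proof -
  let ?M = "(\<Sum>z\<in>S. \<bar>h z\<bar>)"
  have Qnn: "0 \<le> q z y" for y using G by (simp add: is_graph_def)
  have "\<bar>laplacian q h z\<bar> \<le> (\<Sum>y\<in>{y. 0 < q z y}. \<bar>q z y * (h y - h z)\<bar>)"
    unfolding laplacian_def by (rule sum_abs)
  also have "\<dots> \<le> (\<Sum>y\<in>{y. 0 < q z y}. q z y * (2 * ?M))"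
  proof (intro sum_mono)
    fix y
    have hy: "\<bar>h y\<bar> \<le> ?M" by (rule abs_le_N[OF S h])
    have hz: "\<bar>h z\<bar> \<le> ?M" by (rule abs_le_N[OF S h])
    from hy hz have "\<bar>h y - h z\<bar> \<le> 2 * ?M" by linarith
    thus "\<bar>q z y * (h y - h z)\<bar> \<le> q z y * (2 * ?M)"
      using Qnn[of y] by (simp add: abs_mult mult_left_mono)
  qed
  also have "\<dots> = 2 * deg q z * ?M" unfolding deg_def sum_distrib_right[symmetric] by simp
  finally show ?thesis .
qed

lemma hu_N_bound:
  assumes G: "is_graph q" and S: "finite S"
  shows "(\<Sum>z\<in>S. \<bar>hu q S g k z\<bar>) \<le> (2 * (\<Sum>z\<in>S. deg q z)) ^ k * (\<Sum>z\<in>S. \<bar>g z\<bar>)"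
proof (induction k)
  case 0 thus ?case by (simp add: hu_def)
next
  case (Suc k)
  let ?M = "(\<Sum>z\<in>S. \<bar>hu q S g k z\<bar>)"
  have "(\<Sum>z\<in>S. \<bar>hu q S g (Suc k) z\<bar>) = (\<Sum>z\<in>S. \<bar>laplacian q (hu q S g k) z\<bar>)"
    by (intro sum.cong) (auto simp: hu_Suc lap_restrict)
  also have "\<dots> \<le> (\<Sum>z\<in>S. 2 * deg q z * ?M)"
    by (intro sum_mono lap_bound[OF G S]) (simp add: hu_out)
  also have "\<dots> = (2 * (\<Sum>z\<in>S. deg q z)) * ?M"
    by (simp add: sum_distrib_right[symmetric] sum_distrib_left[symmetric])
  also have "\<dots> \<le> (2 * (\<Sum>z\<in>S. deg q z)) * ((2 * (\<Sum>z\<in>S. deg q z)) ^ k * (\<Sum>z\<in>S. \<bar>g z\<bar>))"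
    by (intro mult_left_mono Suc.IH) (simp add: sum_nonneg deg_nonneg)
  finally show ?case by simp
qed

lemma hu_bound:
  assumes G: "is_graph q" and S: "finite S"
  shows "\<bar>hu q S g k x\<bar> \<le> (2 * (\<Sum>z\<in>S. deg q z)) ^ k * (\<Sum>z\<in>S. \<bar>g z\<bar>)"
  using abs_le_N[OF S, of "hu q S g k" x] hu_out[of _ S q g k] hu_N_bound[OF G S, of g k] by force

lemma hu_summable:
  assumes G: "is_graph q" and S: "finite S"
  shows "summable (\<lambda>k. hu q S g k x / fact k * y ^ k)"
proof (rule summable_comparison_test)
  let ?C = "2 * (\<Sum>z\<in>S. deg q z)" and ?M = "(\<Sum>z\<in>S. \<bar>g z\<bar>)"
  show "summable (\<lambda>k. ?M * (inverse (fact k) * (?C * \<bar>y\<bar>) ^ k))"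
    by (intro summable_mult summable_exp)
  show "\<exists>N. \<forall>n\<ge>N. norm (hu q S g n x / fact n * y ^ n) \<le> ?M * (inverse (fact n) * (?C * \<bar>y\<bar>) ^ n)"
  proof (intro exI allI impI)
    fix n :: nat
    have "norm (hu q S g n x / fact n * y ^ n) = \<bar>hu q S g n x\<bar> * \<bar>y\<bar> ^ n / fact n"
      by (simp add: abs_mult power_abs)
    also have "\<dots> \<le> (?C ^ n * ?M) * \<bar>y\<bar> ^ n / fact n"
      by (intro divide_right_mono mult_right_mono hu_bound[OF G S]) auto
    also have "\<dots> = ?M * (inverse (fact n) * (?C * \<bar>y\<bar>) ^ n)"
      by (simp add: power_mult_distrib field_simps)
    finally show "norm (hu q S g n x / fact n * y ^ n) \<le> ?M * (inverse (fact n) * (?C * \<bar>y\<bar>) ^ n)" .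
  qed
qed

lemma heat_fin_alt: "heat_fin q S t g x = (\<Sum>k. hu q S g k x / fact k * t ^ k)"
  unfolding heat_fin_hu by (simp add: mult.commute mult.left_commute)

lemma heat_fin_deriv:
  assumes G: "is_graph q" and S: "finite S"
  shows "((\<lambda>s. heat_fin q S s g x) has_real_derivative
            laplacian (restrict_q q S) (\<lambda>y. heat_fin q S s g y) x) (at s)"
proof -
  let ?c = "\<lambda>x k. hu q S g k x / fact k"
  have D: "((\<lambda>s. \<Sum>k. ?c x k * s ^ k) has_real_derivative (\<Sum>k. diffs (?c x) k * s ^ k)) (at s)"
    by (rule termdiffs_strong_converges_everywhere) (rule hu_summable[OF G S])
  have df: "diffs (?c x) k = hu q S g (Suc k) x / fact k" for k
    by (simp add: diffs_def fact_Suc field_simps del: of_nat_Suc)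
  have "(\<Sum>k. diffs (?c x) k * s ^ k) = laplacian (restrict_q q S) (\<lambda>y. heat_fin q S s g y) x"
  proof (cases "x \<in> S")
    case False
    thus ?thesis by (simp add: df hu_Suc lap_restrict)
  next
    case True
    let ?N = "{y. 0 < q x y}"
    have sm: "summable (\<lambda>k. ?c y k * s ^ k)" for y by (rule hu_summable[OF G S])
    have tm: "diffs (?c x) k * s ^ k = (\<Sum>y\<in>?N. q x y * (?c y k * s ^ k) - q x y * (?c x k * s ^ k))" for k
    proof -
      have "diffs (?c x) k * s ^ k = (\<Sum>y\<in>?N. q x y * (hu q S g k y - hu q S g k x)) / fact k * s ^ k"
        unfolding df hu_Suc lap_restrict using True by (simp add: laplacian_def)
      also have "\<dots> = (\<Sum>y\<in>?N. q x y * (hu q S g k y - hu q S g k x) / fact k * s ^ k)"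
        by (simp add: sum_divide_distrib sum_distrib_right)
      also have "\<dots> = (\<Sum>y\<in>?N. q x y * (?c y k * s ^ k) - q x y * (?c x k * s ^ k))"
        by (intro sum.cong refl) (simp add: field_simps)
      finally show ?thesis .
    qed
    have "(\<Sum>k. diffs (?c x) k * s ^ k)
        = (\<Sum>k. \<Sum>y\<in>?N. q x y * (?c y k * s ^ k) - q x y * (?c x k * s ^ k))"
      by (simp only: tm)
    also have "\<dots> = (\<Sum>y\<in>?N. \<Sum>k. q x y * (?c y k * s ^ k) - q x y * (?c x k * s ^ k))"
      by (rule suminf_sum) (intro summable_diff summable_mult sm)
    also have "\<dots> = (\<Sum>y\<in>?N. q x y * (heat_fin q S s g y - heat_fin q S s g x))"
    proof (intro sum.cong refl)
      fix y
      have "(\<Sum>k. q x y * (?c y k * s ^ k) - q x y * (?c x k * s ^ k))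
          = (\<Sum>k. q x y * (?c y k * s ^ k)) - (\<Sum>k. q x y * (?c x k * s ^ k))"
        by (rule suminf_diff[symmetric]) (intro summable_mult sm)+
      also have "\<dots> = q x y * (heat_fin q S s g y - heat_fin q S s g x)"
        by (simp only: suminf_mult[OF sm] heat_fin_alt right_diff_distrib)
      finally show "(\<Sum>k. q x y * (?c y k * s ^ k) - q x y * (?c x k * s ^ k)) = q x y * (heat_fin q S s g y - heat_fin q S s g x)" .
    qed
    also have "\<dots> = laplacian (restrict_q q S) (\<lambda>y. heat_fin q S s g y) x"
      unfolding lap_restrict using True by (simp add: laplacian_def)
    finally show ?thesis .
  qed
  with D show ?thesis unfolding heat_fin_alt by simp
qed

lemma heat_fin_out: "x \<notin> S \<Longrightarrow> heat_fin q S s g x = 0"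
  by (simp add: heat_fin_hu hu_out)

lemma heat_fin_0: "heat_fin q S 0 g x = g x * indicator S x"
proof -
  have "(\<lambda>k. (0::real) ^ k * hu q S g k x / fact k) = (\<lambda>k. if k = 0 then g x * indicator S x else 0)"
    by (auto simp: hu_def)
  thus ?thesis unfolding heat_fin_hu using sums_single[of 0 "\<lambda>_. g x * indicator S x"]
    by (simp add: sums_iff)
qed



lemma lap_lin: "laplacian q (\<lambda>y. a * f y + b * g y) x = a * laplacian q f x + b * laplacian q g x"
  unfolding laplacian_def sum_distrib_left sum.distrib[symmetric] by (intro sum.cong refl) (simp add: algebra_simps)

lemma lap_diff: "laplacian q (\<lambda>y. f y - g y) x = laplacian q f x - laplacian q g x"
  unfolding laplacian_def sum_subtractf[symmetric] by (intro sum.cong refl) (simp add: algebra_simps)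

lemma lap_const: "laplacian q (\<lambda>y. c) x = 0"
  by (simp add: laplacian_def)

lemma heat_fin_deriv_in:
  assumes G: "is_graph q" and S: "finite S" and x: "x \<in> S"
  shows "((\<lambda>s. heat_fin q S s g x) has_real_derivative laplacian q (\<lambda>y. heat_fin q S s g y) x) (at s)"
  using heat_fin_deriv[OF G S, of g x s] x by (simp add: lap_restrict)

lemma heat_fin_pos:
  assumes G: "is_graph q" and S: "finite S" and t: "0 \<le> t" and g: "\<And>y. 0 \<le> g y"
  shows "0 \<le> heat_fin q S t g x"
proof (cases "x \<in> S")
  case True
  show ?thesis
    by (rule cmp2[OF G S t, where d="\<lambda>s y. heat_fin q S s g y" and d'="\<lambda>s y. laplacian q (\<lambda>y. heat_fin q S s g y) y"])
      (auto simp: heat_fin_deriv_in[OF G S] heat_fin_out heat_fin_0 g True)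
qed (simp add: heat_fin_out)

lemma heat_fin_mono:
  assumes G: "is_graph q" and S': "finite S'" and sub: "S \<subseteq> S'" and t: "0 \<le> t" and g: "\<And>y. 0 \<le> g y"
  shows "heat_fin q S t g x \<le> heat_fin q S' t g x"
proof (cases "x \<in> S")
  case True
  have S: "finite S" using S' sub by (rule rev_finite_subset)
  have "0 \<le> heat_fin q S' t g x - heat_fin q S t g x"
  proof (rule cmp2[OF G S t, where d="\<lambda>s y. heat_fin q S' s g y - heat_fin q S s g y"
        and d'="\<lambda>s y. laplacian q (\<lambda>y. heat_fin q S' s g y) y - laplacian q (\<lambda>y. heat_fin q S s g y) y"])
    show "((\<lambda>s. heat_fin q S' s g p - heat_fin q S s g p) has_real_derivative
        laplacian q (\<lambda>y. heat_fin q S' s g y) p - laplacian q (\<lambda>y. heat_fin q S s g y) p) (at s)"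
      if "p \<in> S" for p s
      using that sub by (intro DERIV_diff heat_fin_deriv_in[OF G S'] heat_fin_deriv_in[OF G S]) auto
  qed (use True sub in \<open>auto simp: lap_diff heat_fin_out heat_fin_0 heat_fin_pos[OF G S' _ g]\<close>)
  thus ?thesis by simp
qed (simp add: heat_fin_out heat_fin_pos[OF G S' t g])

lemma heat_fin_le1:
  assumes G: "is_graph q" and S: "finite S" and t: "0 \<le> t" and g: "\<And>y. g y \<le> 1"
  shows "heat_fin q S t g x \<le> 1"
proof (cases "x \<in> S")
  case True
  have "0 \<le> 1 - heat_fin q S t g x"
  proof (rule cmp2[OF G S t, where d="\<lambda>s y. 1 - heat_fin q S s g y"
        and d'="\<lambda>s y. - laplacian q (\<lambda>y. heat_fin q S s g y) y"])
    show "((\<lambda>s. 1 - heat_fin q S s g p) has_real_derivative - laplacian q (\<lambda>y. heat_fin q S s g y) p) (at s)"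
      if "p \<in> S" for p s
      using that by (intro DERIV_diff[where D=0, simplified] heat_fin_deriv_in[OF G S]) auto
    show "laplacian q (\<lambda>y. 1 - heat_fin q S s g y) p \<le> - laplacian q (\<lambda>y. heat_fin q S s g y) p" for p s
      by (simp add: lap_diff lap_const)
  qed (use True in \<open>auto simp: heat_fin_out heat_fin_0 g\<close>)
  thus ?thesis by simp
qed (simp add: heat_fin_out)

lemma heat_fin_uniq:
  fixes d d' :: "real \<Rightarrow> 'p \<Rightarrow> real"
  assumes G: "is_graph Q" and S: "finite S" and t: "0 \<le> t"
    and der: "\<And>p s. p \<in> S \<Longrightarrow> 0 \<le> s \<Longrightarrow> s \<le> t \<Longrightarrow> ((\<lambda>s. d s p) has_real_derivative d' s p) (at s)"
    and eq: "\<And>p s. p \<in> S \<Longrightarrow> 0 \<le> s \<Longrightarrow> s \<le> t \<Longrightarrow> d' s p = laplacian Q (d s) p"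
    and out: "\<And>p s. p \<notin> S \<Longrightarrow> 0 \<le> s \<Longrightarrow> s \<le> t \<Longrightarrow> d s p = 0"
    and init: "\<And>p. p \<in> S \<Longrightarrow> d 0 p = 0"
    and pS: "p \<in> S"
  shows "d t p = 0"
proof -
  have "0 \<le> d t p"
    by (rule cmp2[OF G S t der]) (auto simp: eq out init pS)
  moreover have "0 \<le> - d t p"
  proof (rule cmp2[OF G S t, where d="\<lambda>s p. - d s p" and d'="\<lambda>s p. - d' s p"])
    show "laplacian Q (\<lambda>p. - d s p) p \<le> - d' s p" if "p \<in> S" "0 \<le> s" "s \<le> t" for p s
      using lap_diff[of Q "\<lambda>_. 0" "d s" p] eq[OF that] by (simp add: lap_const)
  qed (auto intro!: DERIV_minus der simp: out init pS)
  ultimately show ?thesis by simp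
qed

lemma heat_fin_lin:
  assumes G: "is_graph q" and S: "finite S" and t: "0 \<le> t"
  shows "heat_fin q S t (\<lambda>y. a * f y + b * g y) x = a * heat_fin q S t f x + b * heat_fin q S t g x"
proof (cases "x \<in> S")
  case True
  have "heat_fin q S t (\<lambda>y. a * f y + b * g y) x - (a * heat_fin q S t f x + b * heat_fin q S t g x) = 0"
  proof (rule heat_fin_uniq[OF G S t, where d="\<lambda>s y. heat_fin q S s (\<lambda>y. a * f y + b * g y) y - (a * heat_fin q S s f y + b * heat_fin q S s g y)"
        and d'="\<lambda>s y. laplacian q (\<lambda>y. heat_fin q S s (\<lambda>y. a * f y + b * g y) y) y - (a * laplacian q (\<lambda>y. heat_fin q S s f y) y + b * laplacian q (\<lambda>y. heat_fin q S s g y) y)"])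
    show "((\<lambda>s. heat_fin q S s (\<lambda>y. a * f y + b * g y) p - (a * heat_fin q S s f p + b * heat_fin q S s g p)) has_real_derivative
        laplacian q (\<lambda>y. heat_fin q S s (\<lambda>y. a * f y + b * g y) y) p - (a * laplacian q (\<lambda>y. heat_fin q S s f y) p + b * laplacian q (\<lambda>y. heat_fin q S s g y) p)) (at s)"
      if "p \<in> S" for p s
      using that by (intro DERIV_diff DERIV_add DERIV_cmult heat_fin_deriv_in[OF G S])
    show "laplacian q (\<lambda>y. heat_fin q S s (\<lambda>y. a * f y + b * g y) y) p - (a * laplacian q (\<lambda>y. heat_fin q S s f y) p + b * laplacian q (\<lambda>y. heat_fin q S s g y) p)
      = laplacian q (\<lambda>y. heat_fin q S s (\<lambda>y. a * f y + b * g y) y - (a * heat_fin q S s f y + b * heat_fin q S s g y)) p" for p s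
      by (simp add: lap_diff lap_lin)
  qed (use True in \<open>auto simp: heat_fin_out heat_fin_0 algebra_simps\<close>)
  thus ?thesis by simp
qed (simp add: heat_fin_out)



lemma ex_exh: "\<exists>E::nat \<Rightarrow> 'v::countable set. exhaustion E"
proof (intro exI)
  let ?E = "\<lambda>i::nat. {x::'v. to_nat x \<le> i}"
  show "exhaustion ?E" unfolding exhaustion_def
  proof (intro conjI allI)
    fix i show "finite (?E i)"
      using finite_vimageI[of "{..i}" "to_nat :: 'v \<Rightarrow> nat"] by (simp add: vimage_def atMost_def)
  next
    show "incseq ?E" by (auto simp: incseq_def)
  next
    show "(\<Union>i. ?E i) = UNIV" by auto
  qed
qed

lemma exh_sub:
  assumes S: "exhaustion S" and F: "finite F"
  shows "\<exists>i. F \<subseteq> S i"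
  using F
proof (induction F rule: finite_induct)
  case empty thus ?case by simp
next
  case (insert x F)
  then obtain i where i: "F \<subseteq> S i" by blast
  have "x \<in> (\<Union>i. S i)" using S by (simp add: exhaustion_def)
  then obtain j where j: "x \<in> S j" by blast
  have inc: "incseq S" using S by (simp add: exhaustion_def)
  have "S i \<subseteq> S (max i j)" "S j \<subseteq> S (max i j)" using inc by (auto simp: incseq_def)
  thus ?case using i j by blast
qed

lemma exh_union:
  assumes S: "exhaustion S" and A: "finite A"
  shows "exhaustion (\<lambda>i. S i \<union> A)"
  using S A by (auto simp: exhaustion_def incseq_def)

lemma heat_eqI:
  fixes q :: "'v::countable \<Rightarrow> 'v \<Rightarrow> real"
  assumes "\<And>S. exhaustion S \<Longrightarrow> (\<lambda>i. heat_fin q (S i) t f x) \<longlonglongrightarrow> L"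
  shows "heat q t f x = L"
  unfolding heat_def
proof (rule the_equality)
  show "\<forall>S. exhaustion S \<longrightarrow> (\<lambda>i. heat_fin q (S i) t f x) \<longlonglongrightarrow> L" using assms by blast
  fix L' assume L': "\<forall>S. exhaustion S \<longrightarrow> (\<lambda>i. heat_fin q (S i) t f x) \<longlonglongrightarrow> L'"
  obtain E :: "nat \<Rightarrow> 'v set" where E: "exhaustion E" using ex_exh by blast
  show "L' = L" using L' assms[OF E] E LIMSEQ_unique by blast
qed

lemma heat_fin_incseq:
  assumes G: "is_graph q" and S: "exhaustion S" and t: "0 \<le> t" and g: "\<And>y. 0 \<le> g y"
  shows "incseq (\<lambda>i. heat_fin q (S i) t g x)"
  using S unfolding incseq_def exhaustion_def
  by (auto intro!: heat_fin_mono[OF G _ _ t g])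

lemma heat_fin_conv:
  assumes G: "is_graph q" and S: "exhaustion S" and t: "0 \<le> t" and g: "\<And>y. 0 \<le> g y" "\<And>y. g y \<le> 1"
  shows "\<exists>L. (\<lambda>i. heat_fin q (S i) t g x) \<longlonglongrightarrow> L"
proof -
  have "\<forall>i. heat_fin q (S i) t g x \<le> 1"
    using S by (auto intro!: heat_fin_le1[OF G _ t g(2)] simp: exhaustion_def)
  then obtain L where "(\<lambda>i. heat_fin q (S i) t g x) \<longlonglongrightarrow> L"
    using incseq_convergent[OF heat_fin_incseq[of q S t g x, OF G S t g(1)]] by blast
  thus ?thesis by blast
qed

lemma heat_fin_lim_le:
  assumes G: "is_graph q" and S: "exhaustion S" and T: "exhaustion T" and t: "0 \<le> t" and g: "\<And>y. 0 \<le> g y"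
    and LS: "(\<lambda>i. heat_fin q (S i) t g x) \<longlonglongrightarrow> L" and LT: "(\<lambda>i. heat_fin q (T i) t g x) \<longlonglongrightarrow> M"
  shows "L \<le> M"
proof (rule LIMSEQ_le_const2[OF LS], intro exI allI impI)
  fix i
  have "finite (S i)" using S by (simp add: exhaustion_def)
  then obtain j where j: "S i \<subseteq> T j" using exh_sub[OF T] by blast
  have "heat_fin q (S i) t g x \<le> heat_fin q (T j) t g x"
    using T j by (intro heat_fin_mono[OF G _ _ t g]) (auto simp: exhaustion_def)
  also have "\<dots> \<le> M" by (rule incseq_le[OF heat_fin_incseq[OF G T t g] LT])
  finally show "heat_fin q (S i) t g x \<le> M" .
qed

lemma heat_lim01:
  fixes q :: "'v::countable \<Rightarrow> 'v \<Rightarrow> real"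
  assumes G: "is_graph q" and t: "0 \<le> t" and g: "\<And>y. 0 \<le> g y" "\<And>y. g y \<le> 1"
    and S: "exhaustion S"
  shows "(\<lambda>i. heat_fin q (S i) t g x) \<longlonglongrightarrow> heat q t g x"
proof -
  obtain E :: "nat \<Rightarrow> 'v set" where E: "exhaustion E" using ex_exh by blast
  obtain L0 where L0: "(\<lambda>i. heat_fin q (E i) t g x) \<longlonglongrightarrow> L0" using heat_fin_conv[of q E t g x, OF G E t g] by blast
  have all: "(\<lambda>i. heat_fin q (T i) t g x) \<longlonglongrightarrow> L0" if T: "exhaustion T" for T
  proof -
    obtain L where L: "(\<lambda>i. heat_fin q (T i) t g x) \<longlonglongrightarrow> L" using heat_fin_conv[of q T t g x, OF G T t g] by blast
    have "L \<le> L0" by (rule heat_fin_lim_le[OF G T E t g(1) L L0])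
    moreover have "L0 \<le> L" by (rule heat_fin_lim_le[OF G E T t g(1) L0 L])
    ultimately show ?thesis using L by simp
  qed
  have "heat q t g x = L0" by (rule heat_eqI) (rule all)
  thus ?thesis using all[OF S] by simp
qed

lemma heat_lim_bdd:
  fixes q :: "'v::countable \<Rightarrow> 'v \<Rightarrow> real"
  assumes G: "is_graph q" and t: "0 \<le> t" and f: "bounded_fun f" and S: "exhaustion S"
  shows "(\<lambda>i. heat_fin q (S i) t f x) \<longlonglongrightarrow> heat q t f x"
proof -
  obtain C where C: "\<And>y. \<bar>f y\<bar> \<le> C" using f by (auto simp: bounded_fun_def)
  define D where "D = C + 1"
  have Dpos: "0 < D" using C[of x] by (simp add: D_def)
  define g where "g y = (f y + D) / (2 * D)" for y
  have g0: "0 \<le> g y" for y using C[of y] Dpos by (simp add: g_def abs_le_iff D_def)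
  have g1: "g y \<le> 1" for y using C[of y] Dpos by (simp add: g_def abs_le_iff D_def)
  have fg: "f = (\<lambda>y. (2 * D) * g y + (- D) * 1)" using Dpos by (auto simp: g_def)
  have seq: "heat_fin q T t f x = (2 * D) * heat_fin q T t g x + (- D) * heat_fin q T t (\<lambda>_. 1) x" if "finite T" for T
    by (subst fg) (rule heat_fin_lin[OF G that t])
  have lim: "(\<lambda>i. heat_fin q (T i) t f x) \<longlonglongrightarrow> (2 * D) * heat q t g x + (- D) * heat q t (\<lambda>_. 1) x"
    if T: "exhaustion T" for T
  proof -
    have "(\<lambda>i. (2 * D) * heat_fin q (T i) t g x + (- D) * heat_fin q (T i) t (\<lambda>_. 1) x)
        \<longlonglongrightarrow> (2 * D) * heat q t g x + (- D) * heat q t (\<lambda>_. 1) x"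
      by (intro tendsto_intros heat_lim01[OF G t _ _ T]) (auto simp: g0 g1)
    moreover have "heat_fin q (T i) t f x = (2 * D) * heat_fin q (T i) t g x + (- D) * heat_fin q (T i) t (\<lambda>_. 1) x" for i
      using T by (intro seq) (simp add: exhaustion_def)
    ultimately show ?thesis by simp
  qed
  have "heat q t f x = (2 * D) * heat q t g x + (- D) * heat q t (\<lambda>_. 1) x"
    by (rule heat_eqI) (rule lim)
  thus ?thesis using lim[OF S] by simp
qed



lemma lap_add: "laplacian q (\<lambda>y. f y + g y) x = laplacian q f x + laplacian q g x"
  using lap_lin[of q 1 f 1 g x] by simp

lemma LB:
  fixes q :: "'v \<Rightarrow> 'v \<Rightarrow> real" and qt :: "'p \<Rightarrow> 'p \<Rightarrow> real" and \<pi>1 \<pi>2 :: "'p \<Rightarrow> 'v"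
  assumes G: "is_graph q" and Gt: "is_graph qt" and t: "0 \<le> t"
    and g0: "\<And>y. 0 \<le> g y" and g1: "\<And>y. g y \<le> 1"
    and c1: "\<And>h. laplacian qt (\<lambda>p. h (\<pi>1 p)) = (\<lambda>p. laplacian q h (\<pi>1 p))"
    and c2: "\<And>h. laplacian qt (\<lambda>p. h (\<pi>2 p)) = (\<lambda>p. laplacian q h (\<pi>2 p))"
    and A: "finite A" and B: "finite B" and S0: "finite S0"
    and S0def: "\<And>p. p \<in> S0 \<longleftrightarrow> \<pi>1 p \<in> A \<and> \<pi>2 p \<in> B" and pS: "p \<in> S0"
  shows "heat_fin q B t g (\<pi>2 p) + heat_fin q A t (\<lambda>_. 1) (\<pi>1 p) - 1 \<le> heat_fin qt S0 t (\<lambda>p. g (\<pi>2 p)) p"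
proof -
  let ?v = "\<lambda>s p. heat_fin qt S0 s (\<lambda>p. g (\<pi>2 p)) p"
  let ?h = "\<lambda>s y. heat_fin q B s g y"
  let ?k = "\<lambda>s x. heat_fin q A s (\<lambda>_. 1) x"
  have "0 \<le> ?v t p - (?h t (\<pi>2 p) + ?k t (\<pi>1 p) - 1)"
  proof (rule cmp2[OF Gt S0 t, where d="\<lambda>s p. ?v s p - (?h s (\<pi>2 p) + ?k s (\<pi>1 p) - 1)"
        and d'="\<lambda>s p. laplacian qt (?v s) p - (laplacian q (?h s) (\<pi>2 p) + laplacian q (?k s) (\<pi>1 p))"])
    fix p s assume p: "p \<in> S0"
    hence pA: "\<pi>1 p \<in> A" and pB: "\<pi>2 p \<in> B" using S0def by auto
    show "((\<lambda>s. ?v s p - (?h s (\<pi>2 p) + ?k s (\<pi>1 p) - 1)) has_real_derivative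
        laplacian qt (?v s) p - (laplacian q (?h s) (\<pi>2 p) + laplacian q (?k s) (\<pi>1 p))) (at s)"
      using DERIV_diff[OF DERIV_add[OF heat_fin_deriv_in[OF G B pB] heat_fin_deriv_in[OF G A pA]] DERIV_const[of 1]]
      by (intro DERIV_diff heat_fin_deriv_in[OF Gt S0 p]) simp
    have "laplacian qt (\<lambda>p. ?v s p - (?h s (\<pi>2 p) + ?k s (\<pi>1 p) - 1)) p
        = laplacian qt (?v s) p - (laplacian qt (\<lambda>p. ?h s (\<pi>2 p)) p + laplacian qt (\<lambda>p. ?k s (\<pi>1 p)) p)"
      by (simp add: lap_diff lap_add lap_const)
    also have "\<dots> = laplacian qt (?v s) p - (laplacian q (?h s) (\<pi>2 p) + laplacian q (?k s) (\<pi>1 p))"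
      by (simp add: c1 c2)
    finally show "laplacian qt (\<lambda>p. ?v s p - (?h s (\<pi>2 p) + ?k s (\<pi>1 p) - 1)) p
        \<le> laplacian qt (?v s) p - (laplacian q (?h s) (\<pi>2 p) + laplacian q (?k s) (\<pi>1 p))" by simp
  next
    fix p s assume p: "p \<notin> S0" and s: "0 \<le> s" "s \<le> t"
    have h1: "?h s y \<le> 1" for y by (rule heat_fin_le1[OF G B s(1) g1])
    have k1: "?k s x \<le> 1" for x by (rule heat_fin_le1[OF G A s(1)]) simp
    have "\<pi>1 p \<notin> A \<or> \<pi>2 p \<notin> B" using p S0def by auto
    thus "0 \<le> ?v s p - (?h s (\<pi>2 p) + ?k s (\<pi>1 p) - 1)"
      using h1[of "\<pi>2 p"] k1[of "\<pi>1 p"] p by (auto simp: heat_fin_out)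
  next
    fix p assume p: "p \<in> S0"
    hence pA: "\<pi>1 p \<in> A" and pB: "\<pi>2 p \<in> B" using S0def by auto
    show "0 \<le> ?v 0 p - (?h 0 (\<pi>2 p) + ?k 0 (\<pi>1 p) - 1)"
      using p pA pB by (simp add: heat_fin_0)
  qed (rule pS)
  thus ?thesis by simp
qed

lemma bounded_lin: "bounded_fun f \<Longrightarrow> bounded_fun g \<Longrightarrow> bounded_fun (\<lambda>y. a * f y + b * g y)"
proof -
  assume "bounded_fun f" "bounded_fun g"
  then obtain C1 C2 where C: "\<And>y. \<bar>f y\<bar> \<le> C1" "\<And>y. \<bar>g y\<bar> \<le> C2" by (auto simp: bounded_fun_def)
  have "\<bar>a * f y + b * g y\<bar> \<le> \<bar>a\<bar> * C1 + \<bar>b\<bar> * C2" for y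
  proof -
    have "\<bar>a * f y + b * g y\<bar> \<le> \<bar>a\<bar> * \<bar>f y\<bar> + \<bar>b\<bar> * \<bar>g y\<bar>" by (metis abs_mult abs_triangle_ineq)
    also have "\<dots> \<le> \<bar>a\<bar> * C1 + \<bar>b\<bar> * C2" by (intro add_mono mult_left_mono C) auto
    finally show ?thesis .
  qed
  thus ?thesis by (auto simp: bounded_fun_def)
qed

lemma heat_lin:
  fixes q :: "'v::countable \<Rightarrow> 'v \<Rightarrow> real"
  assumes G: "is_graph q" and t: "0 \<le> t" and f: "bounded_fun f" and g: "bounded_fun g"
  shows "heat q t (\<lambda>y. a * f y + b * g y) x = a * heat q t f x + b * heat q t g x"
proof -
  obtain E :: "nat \<Rightarrow> 'v set" where E: "exhaustion E" using ex_exh by blast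
  have "(\<lambda>i. heat_fin q (E i) t (\<lambda>y. a * f y + b * g y) x) \<longlonglongrightarrow> heat q t (\<lambda>y. a * f y + b * g y) x"
    by (rule heat_lim_bdd[OF G t bounded_lin[OF f g] E])
  moreover have "(\<lambda>i. heat_fin q (E i) t (\<lambda>y. a * f y + b * g y) x) \<longlonglongrightarrow> a * heat q t f x + b * heat q t g x"
  proof -
    have "(\<lambda>i. a * heat_fin q (E i) t f x + b * heat_fin q (E i) t g x) \<longlonglongrightarrow> a * heat q t f x + b * heat q t g x"
      by (intro tendsto_intros heat_lim_bdd[OF G t f E] heat_lim_bdd[OF G t g E])
    moreover have "heat_fin q (E i) t (\<lambda>y. a * f y + b * g y) x = a * heat_fin q (E i) t f x + b * heat_fin q (E i) t g x" for i
      using E by (intro heat_fin_lin[OF G _ t]) (simp add: exhaustion_def)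
    ultimately show ?thesis by simp
  qed
  ultimately show ?thesis using LIMSEQ_unique by blast
qed

lemma const_bdd: "bounded_fun (\<lambda>_. c)"
  by (auto simp: bounded_fun_def)

lemma M01:
  fixes q :: "'v::countable \<Rightarrow> 'v \<Rightarrow> real" and qt :: "'p::countable \<Rightarrow> 'p \<Rightarrow> real" and \<pi>1 \<pi>2 :: "'p \<Rightarrow> 'v"
  assumes G: "is_graph q" and Gt: "is_graph qt" and sc: "stoch_complete q" and t: "0 \<le> t"
    and g0: "\<And>y. 0 \<le> g y" and g1: "\<And>y. g y \<le> 1"
    and c1: "\<And>h. laplacian qt (\<lambda>p. h (\<pi>1 p)) = (\<lambda>p. laplacian q h (\<pi>1 p))"
    and c2: "\<And>h. laplacian qt (\<lambda>p. h (\<pi>2 p)) = (\<lambda>p. laplacian q h (\<pi>2 p))"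
    and inj: "inj (\<lambda>p. (\<pi>1 p, \<pi>2 p))"
    and S: "exhaustion S"
  shows "(\<lambda>i. heat_fin qt (S i) t (\<lambda>p. g (\<pi>2 p)) p) \<longlonglongrightarrow> heat q t g (\<pi>2 p)"
proof -
  have one: "heat q t (\<lambda>_. 1) x = 1" for x using sc t by (simp add: stoch_complete_def)
  have lower: "heat q t h (\<pi>2 p) \<le> heat qt t (\<lambda>p. h (\<pi>2 p)) p" if h0: "\<And>y. 0 \<le> h y" and h1: "\<And>y. h y \<le> 1" for h
  proof -
    obtain E :: "nat \<Rightarrow> 'v set" where E0: "exhaustion E" using ex_exh by blast
    define E' where "E' i = E i \<union> {\<pi>1 p, \<pi>2 p}" for i
    have E': "exhaustion E'" unfolding E'_def by (rule exh_union[OF E0]) simp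
    have finE': "finite (E' i)" for i using E' by (simp add: exhaustion_def)
    have bound: "heat_fin q (E' i) t h (\<pi>2 p) + heat_fin q (E' i) t (\<lambda>_. 1) (\<pi>1 p) - 1 \<le> heat qt t (\<lambda>p. h (\<pi>2 p)) p" for i
    proof -
      define S0 where "S0 = (\<lambda>p. (\<pi>1 p, \<pi>2 p)) -` (E' i \<times> E' i)"
      have finS0: "finite S0" unfolding S0_def
        by (rule finite_vimageI) (use finE' inj in auto)
      have S0def: "p' \<in> S0 \<longleftrightarrow> \<pi>1 p' \<in> E' i \<and> \<pi>2 p' \<in> E' i" for p' by (simp add: S0_def)
      have pS0: "p \<in> S0" by (simp add: S0def E'_def)
      obtain j where j: "S0 \<subseteq> S j" using exh_sub[OF S finS0] by blast
      have "heat_fin q (E' i) t h (\<pi>2 p) + heat_fin q (E' i) t (\<lambda>_. 1) (\<pi>1 p) - 1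
          \<le> heat_fin qt S0 t (\<lambda>p. h (\<pi>2 p)) p"
        by (rule LB[OF G Gt t h0 h1 c1 c2 finE' finE' finS0 S0def pS0])
      also have "\<dots> \<le> heat_fin qt (S j) t (\<lambda>p. h (\<pi>2 p)) p"
        using S j by (intro heat_fin_mono[OF Gt _ _ t]) (auto simp: exhaustion_def h0)
      also have "\<dots> \<le> heat qt t (\<lambda>p. h (\<pi>2 p)) p"
        by (rule incseq_le[OF heat_fin_incseq[OF Gt S t] heat_lim01[OF Gt t _ _ S]]) (auto simp: h0 h1)
      finally show ?thesis .
    qed
    have "(\<lambda>i. heat_fin q (E' i) t h (\<pi>2 p) + heat_fin q (E' i) t (\<lambda>_. 1) (\<pi>1 p) - 1)
        \<longlonglongrightarrow> heat q t h (\<pi>2 p) + heat q t (\<lambda>_. 1) (\<pi>1 p) - 1"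
      by (intro tendsto_intros heat_lim01[OF G t _ _ E']) (auto simp: h0 h1)
    hence "heat q t h (\<pi>2 p) + heat q t (\<lambda>_. 1) (\<pi>1 p) - 1 \<le> heat qt t (\<lambda>p. h (\<pi>2 p)) p"
      by (rule LIMSEQ_le_const2) (use bound in blast)
    thus ?thesis by (simp add: one)
  qed
  let ?g' = "\<lambda>y. 1 - g y"
  have lim1: "(\<lambda>i. heat_fin qt (S i) t (\<lambda>p. g (\<pi>2 p)) p) \<longlonglongrightarrow> heat qt t (\<lambda>p. g (\<pi>2 p)) p"
    by (rule heat_lim01[OF Gt t _ _ S]) (auto simp: g0 g1)
  have lim2: "(\<lambda>i. heat_fin qt (S i) t (\<lambda>p. ?g' (\<pi>2 p)) p) \<longlonglongrightarrow> heat qt t (\<lambda>p. ?g' (\<pi>2 p)) p"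
    by (rule heat_lim01[OF Gt t _ _ S]) (auto simp: g0 g1)
  have sum1: "heat_fin qt (S i) t (\<lambda>p. g (\<pi>2 p)) p + heat_fin qt (S i) t (\<lambda>p. ?g' (\<pi>2 p)) p \<le> 1" for i
  proof -
    have fin: "finite (S i)" using S by (simp add: exhaustion_def)
    have "heat_fin qt (S i) t (\<lambda>p. g (\<pi>2 p)) p + heat_fin qt (S i) t (\<lambda>p. ?g' (\<pi>2 p)) p
        = heat_fin qt (S i) t (\<lambda>p. 1 * g (\<pi>2 p) + 1 * ?g' (\<pi>2 p)) p"
      by (simp only: heat_fin_lin[OF Gt fin t])
    also have "\<dots> \<le> 1" by (rule heat_fin_le1[OF Gt fin t]) simp
    finally show ?thesis .
  qed
  have "heat qt t (\<lambda>p. g (\<pi>2 p)) p + heat qt t (\<lambda>p. ?g' (\<pi>2 p)) p \<le> 1"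
    by (rule LIMSEQ_le_const2[OF tendsto_add[OF lim1 lim2]]) (use sum1 in blast)
  moreover have "heat q t g (\<pi>2 p) \<le> heat qt t (\<lambda>p. g (\<pi>2 p)) p" by (rule lower[OF g0 g1])
  moreover have "heat q t ?g' (\<pi>2 p) \<le> heat qt t (\<lambda>p. ?g' (\<pi>2 p)) p" by (rule lower) (auto simp: g0 g1)
  moreover have "heat q t ?g' (\<pi>2 p) = 1 - heat q t g (\<pi>2 p)"
  proof -
    have gb: "bounded_fun g" unfolding bounded_fun_def using g0 g1 by (intro exI[of _ 1]) (auto simp: abs_le_iff intro: order_trans[OF _ g0])
    have "heat q t (\<lambda>y. 1 * 1 + (-1) * g y) (\<pi>2 p) = 1 * heat q t (\<lambda>_. 1) (\<pi>2 p) + (-1) * heat q t g (\<pi>2 p)"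
      by (rule heat_lin[OF G t const_bdd gb])
    thus ?thesis by (simp add: one)
  qed
  ultimately have "heat qt t (\<lambda>p. g (\<pi>2 p)) p = heat q t g (\<pi>2 p)" by linarith
  thus ?thesis using lim1 by simp
qed



lemma Mbdd:
  fixes q :: "'v::countable \<Rightarrow> 'v \<Rightarrow> real" and qt :: "'p::countable \<Rightarrow> 'p \<Rightarrow> real" and \<pi>1 \<pi>2 :: "'p \<Rightarrow> 'v"
  assumes G: "is_graph q" and Gt: "is_graph qt" and sc: "stoch_complete q" and t: "0 \<le> t"
    and f: "bounded_fun f"
    and c1: "\<And>h. laplacian qt (\<lambda>p. h (\<pi>1 p)) = (\<lambda>p. laplacian q h (\<pi>1 p))"
    and c2: "\<And>h. laplacian qt (\<lambda>p. h (\<pi>2 p)) = (\<lambda>p. laplacian q h (\<pi>2 p))"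
    and inj: "inj (\<lambda>p. (\<pi>1 p, \<pi>2 p))"
  shows "heat qt t (\<lambda>p. f (\<pi>2 p)) p = heat q t f (\<pi>2 p)"
proof (rule heat_eqI)
  fix S :: "nat \<Rightarrow> 'p set" assume S: "exhaustion S"
  obtain C where C: "\<And>y. \<bar>f y\<bar> \<le> C" using f by (auto simp: bounded_fun_def)
  define D where "D = C + 1"
  have Dpos: "0 < D" using C[of undefined] by (simp add: D_def)
  define g where "g y = (f y + D) / (2 * D)" for y
  have g0: "0 \<le> g y" for y using C[of y] Dpos by (simp add: g_def abs_le_iff D_def)
  have g1: "g y \<le> 1" for y using C[of y] Dpos by (simp add: g_def abs_le_iff D_def)
  have fg: "f = (\<lambda>y. (2 * D) * g y + (- D) * 1)" using Dpos by (auto simp: g_def)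
  have gb: "bounded_fun g" unfolding bounded_fun_def using g0 g1
    by (intro exI[of _ 1]) (auto simp: abs_le_iff intro: order_trans[OF _ g0])
  have hf: "heat q t f (\<pi>2 p) = (2 * D) * heat q t g (\<pi>2 p) + (- D) * heat q t (\<lambda>_. 1) (\<pi>2 p)"
    by (subst fg) (rule heat_lin[OF G t gb const_bdd])
  have seq: "heat_fin qt (S i) t (\<lambda>p. f (\<pi>2 p)) p
      = (2 * D) * heat_fin qt (S i) t (\<lambda>p. g (\<pi>2 p)) p + (- D) * heat_fin qt (S i) t (\<lambda>p. 1) p" for i
  proof -
    have fin: "finite (S i)" using S by (simp add: exhaustion_def)
    have "(\<lambda>p. f (\<pi>2 p)) = (\<lambda>p. (2 * D) * g (\<pi>2 p) + (- D) * 1)" by (subst fg) simp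
    thus ?thesis by (simp only: heat_fin_lin[OF Gt fin t])
  qed
  have "(\<lambda>i. (2 * D) * heat_fin qt (S i) t (\<lambda>p. g (\<pi>2 p)) p + (- D) * heat_fin qt (S i) t (\<lambda>p. (\<lambda>_. 1) (\<pi>2 p)) p)
      \<longlonglongrightarrow> (2 * D) * heat q t g (\<pi>2 p) + (- D) * heat q t (\<lambda>_. 1) (\<pi>2 p)"
    by (intro tendsto_intros M01[OF G Gt sc t _ _ c1 c2 inj S]) (auto simp: g0 g1)
  thus "(\<lambda>i. heat_fin qt (S i) t (\<lambda>p. f (\<pi>2 p)) p) \<longlonglongrightarrow> heat q t f (\<pi>2 p)"
    by (simp add: seq hf)
qed

theorem mainTheorem5:
  fixes q :: "'v::countable \<Rightarrow> 'v \<Rightarrow> real"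
    and qt :: "'v \<times> 'v \<Rightarrow> 'v \<times> 'v \<Rightarrow> real"
    and f :: "'v \<Rightarrow> real" and t :: real
  assumes "is_graph q" and "reversible q" and "stoch_complete q"
    and "coupling_graph q qt"
    and "bounded_fun f" and "0 \<le> t"
  shows "heat qt t (\<lambda>(x, y). f y) = (\<lambda>(x, y). heat q t f y) \<and>
         heat qt t (\<lambda>(x, y). f x) = (\<lambda>(x, y). heat q t f x)"
proof -
  have Gt: "is_graph qt" using assms(4) by (simp add: coupling_graph_def)
  have cfst: "laplacian qt (\<lambda>p. h (fst p)) = (\<lambda>p. laplacian q h (fst p))" for h
    using assms(4) unfolding coupling_graph_def by (simp add: case_prod_beta')
  have csnd: "laplacian qt (\<lambda>p. h (snd p)) = (\<lambda>p. laplacian q h (snd p))" for h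
    using assms(4) unfolding coupling_graph_def by (simp add: case_prod_beta')
  have i1: "inj (\<lambda>p::'v \<times> 'v. (fst p, snd p))" by (auto simp: inj_on_def)
  have i2: "inj (\<lambda>p::'v \<times> 'v. (snd p, fst p))" by (auto simp: inj_on_def prod_eq_iff)
  have A: "heat qt t (\<lambda>p. f (snd p)) p = heat q t f (snd p)" for p
    by (rule Mbdd[OF assms(1) Gt assms(3) assms(6) assms(5) cfst csnd i1])
  have B: "heat qt t (\<lambda>p. f (fst p)) p = heat q t f (fst p)" for p
    by (rule Mbdd[OF assms(1) Gt assms(3) assms(6) assms(5) csnd cfst i2])
  show ?thesis
    using A B by (auto simp: case_prod_beta' fun_eq_iff)
qed

end
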